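(* Let $X$ be a Banach space, $\mathcal F$ a filter of subsets of $\mathbb N$, and $(e_n)_{n=1}^\infty$ an $\mathcal F$-basis of $X$ with partial sum maps $(S_n)$. Suppose $(f_n)_{n=1}^\infty$ is a Schauder basis of $X$ with coordinate functionals $(f_n^\ast)$ and partial sum projections $T_n(x)=\sum_{k=1}^n f_k^\ast(x)f_k$, and that there is a set $\{n_1<n_2<\cdots\}\in\mathcal F$ such that each $S_{n_j}-T_{n_j}$ is a finite-rank operator admitting a support and $$\operatorname{supp}(S_{n_1}-T_{n_1})<\operatorname{supp}(S_{n_2}-T_{n_2})<\cdots.$$ Then $(e_n)$ is an $\mathcal F$-basis with individual brackets, i.e. for each $x\in X$ there is $A\in\mathcal F$ (depending on $x$) with $\lim_{\nu\to\infty,\ \nu\in A}\|S_\nu(x)-x\|=0$.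
   Context: A filter $\mathcal F$ of subsets of $\mathbb N$ is a nonempty family not containing $\emptyset$, closed under finite intersections and supersets. A sequence $(e_n)$ in a Banach space $X$ is an $\mathcal F$-basis if for each $x\in X$ there is a unique scalar sequence $(a_n)$ with $x=\mathcal F\text{-}\lim_n\sum_{k=1}^n a_ke_k$ in norm (for every $\varepsilon>0$ there is $A\in\mathcal F$ with $\|x-\sum_{k\le n}a_ke_k\|<\varepsilon$ for $n\in A$); $e_n^\ast(x)=a_n$, $S_n(x)=\sum_{k=1}^n e_k^\ast(x)e_k$. If $T\colon X\to X$ is a finite-rank operator that can be written as $T(x)=\sum_{j=1}^k f_{m_j}^\ast(x)x_j$ with nonzero $x_1,\dots,x_k\in X$ and $m_1<\dots<m_k$, then $\operatorname{supp}(T)=\{m_1,\dots,m_k\}$. For finite $A,B\subset\mathbb N$, $A<B$ means $\max A<\min B$. *)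

theory Defs
  imports "HOL-Analysis.Analysis"
begin

text \<open>Indices: the paper's \<open>\<nat> = {1,2,...}\<close> is rendered as the Isabelle type nat
  (starting at 0); this is only a relabelling.\<close>

definition is_set_filter :: "nat set set \<Rightarrow> bool" where
  "is_set_filter F \<longleftrightarrow> F \<noteq> {} \<and> {} \<notin> F \<and>
     (\<forall>A\<in>F. \<forall>B\<in>F. A \<inter> B \<in> F) \<and> (\<forall>A\<in>F. \<forall>B. A \<subseteq> B \<longrightarrow> B \<in> F)"

definition F_lim :: "nat set set \<Rightarrow> (nat \<Rightarrow> 'a::real_normed_vector) \<Rightarrow> 'a \<Rightarrow> bool" where
  "F_lim F s x \<longleftrightarrow> (\<forall>\<epsilon>>0. \<exists>A\<in>F. \<forall>n\<in>A. norm (x - s n) < \<epsilon>)"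

definition F_basis :: "nat set set \<Rightarrow> (nat \<Rightarrow> 'a::real_normed_vector) \<Rightarrow> bool" where
  "F_basis F e \<longleftrightarrow> (\<forall>x. \<exists>!a::nat \<Rightarrow> real. F_lim F (\<lambda>n. \<Sum>k\<le>n. a k *\<^sub>R e k) x)"

definition F_coord :: "nat set set \<Rightarrow> (nat \<Rightarrow> 'a::real_normed_vector) \<Rightarrow> nat \<Rightarrow> 'a \<Rightarrow> real" where
  "F_coord F e n x = (THE a::nat \<Rightarrow> real. F_lim F (\<lambda>m. \<Sum>k\<le>m. a k *\<^sub>R e k) x) n"

definition F_partial :: "nat set set \<Rightarrow> (nat \<Rightarrow> 'a::real_normed_vector) \<Rightarrow> nat \<Rightarrow> 'a \<Rightarrow> 'a" where
  "F_partial F e n x = (\<Sum>k\<le>n. F_coord F e k x *\<^sub>R e k)"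

definition schauder_basis :: "(nat \<Rightarrow> 'a::real_normed_vector) \<Rightarrow> bool" where
  "schauder_basis f \<longleftrightarrow> (\<forall>x. \<exists>!a::nat \<Rightarrow> real. (\<lambda>n. \<Sum>k\<le>n. a k *\<^sub>R f k) \<longlonglongrightarrow> x)"

definition schauder_coord :: "(nat \<Rightarrow> 'a::real_normed_vector) \<Rightarrow> nat \<Rightarrow> 'a \<Rightarrow> real" where
  "schauder_coord f n x = (THE a::nat \<Rightarrow> real. (\<lambda>m. \<Sum>k\<le>m. a k *\<^sub>R f k) \<longlonglongrightarrow> x) n"

definition schauder_partial :: "(nat \<Rightarrow> 'a::real_normed_vector) \<Rightarrow> nat \<Rightarrow> 'a \<Rightarrow> 'a" where
  "schauder_partial f n x = (\<Sum>k\<le>n. schauder_coord f k x *\<^sub>R f k)"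

definition is_support :: "(nat \<Rightarrow> 'a \<Rightarrow> real) \<Rightarrow> ('a \<Rightarrow> 'a::real_normed_vector) \<Rightarrow> nat set \<Rightarrow> bool" where
  "is_support fs T M \<longleftrightarrow> finite M \<and>
     (\<exists>y. (\<forall>m\<in>M. y m \<noteq> 0) \<and> (\<forall>x. T x = (\<Sum>m\<in>M. fs m x *\<^sub>R y m)))"

definition set_less :: "nat set \<Rightarrow> nat set \<Rightarrow> bool" where
  "set_less A B \<longleftrightarrow> (\<forall>a\<in>A. \<forall>b\<in>B. a < b)"

end

theory Submission
  imports Defs
begin

lemma weights:
  fixes a :: "nat \<Rightarrow> real" and f :: "nat \<Rightarrow> 'a::banach" and P :: "nat \<Rightarrow> bool"
  assumes conv: "(\<lambda>N. \<Sum>k\<le>N. a k *\<^sub>R f k) \<longlonglongrightarrow> x"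
    and unb: "\<And>N. \<exists>L\<ge>N. P L"
  shows "\<exists>\<rho>::nat\<Rightarrow>nat. (\<forall>m m'. (\<forall>L. P L \<longrightarrow> (L \<le> m \<longleftrightarrow> L \<le> m')) \<longrightarrow> \<rho> m = \<rho> m')
     \<and> (\<forall>R. \<exists>K. \<forall>m\<ge>K. R \<le> \<rho> m)
     \<and> convergent (\<lambda>N. \<Sum>k\<le>N. ((1 + real (\<rho> k)) * a k) *\<^sub>R f k)"
proof -
  define Q where "Q L = (\<Sum>k<L. a k *\<^sub>R f k)" for L
  have QS: "Q (Suc N) = (\<Sum>k\<le>N. a k *\<^sub>R f k)" for N
    unfolding Q_def using lessThan_Suc_atMost by simp
  have QSl: "(\<lambda>N. Q (Suc N)) \<longlonglongrightarrow> x" using conv QS by simp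
  have Qlim: "Q \<longlonglongrightarrow> x" using QSl by (rule LIMSEQ_imp_Suc)
  define C where "C r L \<longleftrightarrow> P L \<and> r \<le> L \<and> (\<forall>k\<ge>L. norm (x - Q k) \<le> (1/4::real)^r)" for r L
  have Cex: "\<exists>L. C r L" for r
  proof -
    have "(1/4::real)^r > 0" by simp
    from LIMSEQ_D[OF Qlim this] obtain K where K: "\<forall>n\<ge>K. norm (Q n - x) < (1/4)^r" by blast
    obtain L where L: "L \<ge> max K r" "P L" using unb by blast
    have "\<forall>k\<ge>L. norm (x - Q k) \<le> (1/4::real)^r"
      using K L by (metis less_imp_le max.boundedE norm_minus_commute order_trans)
    then show ?thesis using L unfolding C_def by auto
  qed
  define Lr where "Lr r = (LEAST L. C r L)" for r
  have CL: "C r (Lr r)" for r unfolding Lr_def using Cex by (rule LeastI_ex)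
  have Lge: "r \<le> Lr r" for r using CL unfolding C_def by auto
  have LP: "P (Lr r)" for r using CL unfolding C_def by auto
  have Lnorm: "\<And>k. k \<ge> Lr r \<Longrightarrow> norm (x - Q k) \<le> (1/4::real)^r" for r using CL unfolding C_def by auto
  have LSuc: "Lr r \<le> Lr (Suc r)" for r
  proof -
    have "(1/4::real)^(Suc r) \<le> (1/4)^r" by (simp add: power_decreasing)
    then have "C r (Lr (Suc r))" using CL[of "Suc r"] unfolding C_def by (meson Suc_leD order_trans)
    then show ?thesis unfolding Lr_def by (rule Least_le)
  qed
  have Lmono: "r \<le> s \<Longrightarrow> Lr r \<le> Lr s" for r s
    using LSuc by (meson lift_Suc_mono_le)
  define \<rho> where "\<rho> m = (LEAST r. m < Lr r)" for m
  have rex: "m < Lr (Suc m)" for m using Lge[of "Suc m"] by simp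
  have riff: "r < \<rho> m \<longleftrightarrow> Lr r \<le> m" for r m
  proof
    assume "r < \<rho> m" then show "Lr r \<le> m" unfolding \<rho>_def using not_less_Least by fastforce
  next
    assume a: "Lr r \<le> m"
    show "r < \<rho> m"
    proof (rule ccontr)
      assume "\<not> r < \<rho> m"
      then have "Lr (\<rho> m) \<le> Lr r" using Lmono by simp
      moreover have "m < Lr (\<rho> m)" unfolding \<rho>_def using rex by (rule LeastI)
      ultimately show False using a by simp
    qed
  qed
  have inv: "\<rho> m = \<rho> m'" if H: "\<forall>L. P L \<longrightarrow> (L \<le> m \<longleftrightarrow> L \<le> m')" for m m'
  proof -
    have "(\<lambda>r. m < Lr r) = (\<lambda>r. m' < Lr r)" using H LP by (auto simp: not_le[symmetric])
    then show ?thesis unfolding \<rho>_def by simp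
  qed
  have unbr: "\<forall>m\<ge>Lr R. R \<le> \<rho> m" for R using riff by (meson less_imp_le order_trans order_refl)
  have rmono: "\<rho> N \<le> \<rho> (Suc N)" for N
    by (meson le_SucI not_le riff order_refl)
  have cf: "(\<Sum>k\<le>N. ((1 + real (\<rho> k)) * a k) *\<^sub>R f k)
      = Q (Suc N) + (\<Sum>r<\<rho> N. (Q (Suc N) - Q (Lr r)))" for N
  proof (induction N)
    case 0
    have "(\<Sum>r<\<rho> 0. (Q (Suc 0) - Q (Lr r))) = (\<Sum>r<\<rho> 0. a 0 *\<^sub>R f 0)"
    proof (rule sum.cong)
      fix r assume "r \<in> {..<\<rho> 0}"
      then have "Lr r = 0" using riff by auto
      then show "Q (Suc 0) - Q (Lr r) = a 0 *\<^sub>R f 0" unfolding Q_def by simp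
    qed simp
    also have "\<dots> = real (\<rho> 0) *\<^sub>R (a 0 *\<^sub>R f 0)" by (simp add: sum_constant_scaleR)
    finally show ?case unfolding Q_def by (simp add: algebra_simps)
  next
    case (Suc N)
    define d where "d = a (Suc N) *\<^sub>R f (Suc N)"
    have QSS: "Q (Suc (Suc N)) = Q (Suc N) + d" unfolding Q_def d_def by simp
    have s1: "(\<Sum>r<\<rho> (Suc N). (Q (Suc N) - Q (Lr r))) = (\<Sum>r<\<rho> N. (Q (Suc N) - Q (Lr r)))"
    proof (rule sum.mono_neutral_right)
      show "\<forall>i\<in>{..<\<rho> (Suc N)} - {..<\<rho> N}. Q (Suc N) - Q (Lr i) = 0"
      proof
        fix i assume "i \<in> {..<\<rho> (Suc N)} - {..<\<rho> N}"
        then have "i < \<rho> (Suc N)" "\<not> i < \<rho> N" by auto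
        then have "Lr i \<le> Suc N" "\<not> Lr i \<le> N" by (simp_all add: riff)
        then have "Lr i = Suc N" by simp
        then show "Q (Suc N) - Q (Lr i) = 0" by simp
      qed
    qed (use rmono in auto)
    have "(\<Sum>r<\<rho> (Suc N). (Q (Suc (Suc N)) - Q (Lr r)))
        = (\<Sum>r<\<rho> (Suc N). (Q (Suc N) - Q (Lr r)) + d)" by (simp add: QSS algebra_simps)
    also have "\<dots> = (\<Sum>r<\<rho> (Suc N). (Q (Suc N) - Q (Lr r))) + real (\<rho> (Suc N)) *\<^sub>R d"
      by (simp add: sum.distrib sum_constant_scaleR)
    finally have s2: "(\<Sum>r<\<rho> (Suc N). (Q (Suc (Suc N)) - Q (Lr r)))
       = (\<Sum>r<\<rho> N. (Q (Suc N) - Q (Lr r))) + real (\<rho> (Suc N)) *\<^sub>R d" using s1 by simp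
    show ?case using Suc.IH s2 QSS unfolding d_def by (simp add: algebra_simps)
  qed
  define u where "u r = x - Q (Lr r)" for r
  have un: "norm (u r) \<le> (1/4)^r" for r unfolding u_def using Lnorm by simp
  have su: "summable u"
    by (rule summable_comparison_test'[where N=0 and g="\<lambda>r. (1/4::real)^r"]) (use un summable_geometric[of "1/4::real"] in auto)
  have rlim: "filterlim \<rho> at_top sequentially"
    unfolding filterlim_at_top eventually_sequentially using unbr by blast
  have t1: "(\<lambda>N. \<Sum>r<\<rho> N. u r) \<longlonglongrightarrow> suminf u"
    using filterlim_compose[OF summable_LIMSEQ[OF su] rlim] by simp
  have g0: "(\<lambda>n. 4 * (1/2::real)^n) \<longlonglongrightarrow> 0"
    using tendsto_mult_right_zero[OF LIMSEQ_power_zero[of "1/2::real"]] by simp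
  have g0': "(\<lambda>N. 4 * (1/2::real)^(\<rho> N)) \<longlonglongrightarrow> 0"
    using filterlim_compose[OF g0 rlim] by simp
  have t2: "(\<lambda>N. real (\<rho> N) *\<^sub>R (Q (Suc N) - x)) \<longlonglongrightarrow> 0"
  proof (rule Lim_null_comparison[OF _ g0'])
    show "\<forall>\<^sub>F N in sequentially. norm (real (\<rho> N) *\<^sub>R (Q (Suc N) - x)) \<le> 4 * (1/2) ^ \<rho> N"
    proof (rule always_eventually, rule allI)
      fix N
      show "norm (real (\<rho> N) *\<^sub>R (Q (Suc N) - x)) \<le> 4 * (1/2) ^ \<rho> N"
      proof (cases "\<rho> N = 0")
        case True then show ?thesis by simp
      next
        case False
        then obtain r where r: "\<rho> N = Suc r" by (cases "\<rho> N") auto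
        then have "r < \<rho> N" by simp
        then have "Lr r \<le> N" by (simp add: riff)
        then have nb: "norm (Q (Suc N) - x) \<le> (1/4)^r" using Lnorm[of r "Suc N"] by (simp add: norm_minus_commute)
        have "real (Suc r) \<le> 2^(Suc r)"
          by (metis of_nat_le_iff of_nat_numeral of_nat_power less_exp less_imp_le)
        have "norm (real (\<rho> N) *\<^sub>R (Q (Suc N) - x)) = real (Suc r) * norm (Q (Suc N) - x)" using r by simp
        also have "\<dots> \<le> 2^(Suc r) * (1/4)^r"
          by (rule mult_mono) (use \<open>real (Suc r) \<le> 2^(Suc r)\<close> nb in auto)
        also have "\<dots> = 4 * (1/2)^(Suc r)"
        proof -
          have "(2::real)^r * 2^r = 4^r" by (metis power_mult_distrib mult_2_right numeral_Bit0 numeral_One one_add_one)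
          then show ?thesis by (simp add: power_divide field_simps)
        qed
        finally show ?thesis using r by simp
      qed
    qed
  qed
  have eq: "(\<Sum>k\<le>N. ((1 + real (\<rho> k)) * a k) *\<^sub>R f k)
     = Q (Suc N) + real (\<rho> N) *\<^sub>R (Q (Suc N) - x) + (\<Sum>r<\<rho> N. u r)" for N
  proof -
    have "(\<Sum>r<\<rho> N. (Q (Suc N) - Q (Lr r))) = (\<Sum>r<\<rho> N. (Q (Suc N) - x) + u r)"
      unfolding u_def by simp
    also have "\<dots> = real (\<rho> N) *\<^sub>R (Q (Suc N) - x) + (\<Sum>r<\<rho> N. u r)"
      by (simp add: sum.distrib sum_constant_scaleR)
    finally show ?thesis using cf by (simp add: add.assoc)
  qed
  have "(\<lambda>N. \<Sum>k\<le>N. ((1 + real (\<rho> k)) * a k) *\<^sub>R f k) \<longlonglongrightarrow> x + 0 + suminf u"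
    unfolding eq by (intro tendsto_add QSl t2 t1)
  then have "convergent (\<lambda>N. \<Sum>k\<le>N. ((1 + real (\<rho> k)) * a k) *\<^sub>R f k)"
    unfolding convergent_def by blast
  then show ?thesis using inv unbr by blast
qed


lemma sch_coord:
  assumes "schauder_basis f" "(\<lambda>N. \<Sum>k\<le>N. c k *\<^sub>R f k) \<longlonglongrightarrow> z"
  shows "schauder_coord f m z = c m"
proof -
  have "(THE a::nat \<Rightarrow> real. (\<lambda>m. \<Sum>k\<le>m. a k *\<^sub>R f k) \<longlonglongrightarrow> z) = c"
  proof (rule the1_equality)
    show "\<exists>!a::nat \<Rightarrow> real. (\<lambda>m. \<Sum>k\<le>m. a k *\<^sub>R f k) \<longlonglongrightarrow> z"
      using assms(1) unfolding schauder_basis_def by blast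
  qed (rule assms(2))
  then show ?thesis unfolding schauder_coord_def by simp
qed

lemma sch_partial:
  assumes "schauder_basis f"
  shows "(\<lambda>N. schauder_partial f N x) \<longlonglongrightarrow> x"
proof -
  have "(\<lambda>m. \<Sum>k\<le>m. (THE a::nat \<Rightarrow> real. (\<lambda>m. \<Sum>k\<le>m. a k *\<^sub>R f k) \<longlonglongrightarrow> x) k *\<^sub>R f k) \<longlonglongrightarrow> x"
  proof -
    have ex: "\<exists>!a::nat \<Rightarrow> real. (\<lambda>m. \<Sum>k\<le>m. a k *\<^sub>R f k) \<longlonglongrightarrow> x"
      using assms(1) unfolding schauder_basis_def by blast
    show ?thesis using theI'[OF ex] by simp
  qed
  then show ?thesis unfolding schauder_partial_def schauder_coord_def by simp
qed

lemma F_partial_lim: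
  assumes "F_basis F e"
  shows "F_lim F (\<lambda>N. F_partial F e N x) x"
proof -
  have "F_lim F (\<lambda>m. \<Sum>k\<le>m. (THE a::nat \<Rightarrow> real. F_lim F (\<lambda>m. \<Sum>k\<le>m. a k *\<^sub>R e k) x) k *\<^sub>R e k) x"
  proof -
    have ex: "\<exists>!a::nat \<Rightarrow> real. F_lim F (\<lambda>m. \<Sum>k\<le>m. a k *\<^sub>R e k) x"
      using assms(1) unfolding F_basis_def by blast
    show ?thesis using theI'[OF ex] by simp
  qed
  then show ?thesis unfolding F_partial_def F_coord_def by simp
qed

theorem theorem3p2:
  fixes F :: "nat set set" and e f :: "nat \<Rightarrow> 'a::banach" and n :: "nat \<Rightarrow> nat"
  assumes "is_set_filter F"
    and "F_basis F e"
    and "schauder_basis f"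
    and "strict_mono n" and "range n \<in> F"
    and "\<forall>j. \<exists>M. is_support (schauder_coord f)
              (\<lambda>x. F_partial F e (n j) x - schauder_partial f (n j) x) M"
    and "\<forall>i j M M'. i < j \<longrightarrow>
           is_support (schauder_coord f) (\<lambda>x. F_partial F e (n i) x - schauder_partial f (n i) x) M \<longrightarrow>
           is_support (schauder_coord f) (\<lambda>x. F_partial F e (n j) x - schauder_partial f (n j) x) M' \<longrightarrow>
           set_less M M'"
  shows "\<forall>x. \<exists>A\<in>F. \<forall>\<epsilon>>0. \<exists>N. \<forall>\<nu>\<in>A. \<nu> \<ge> N \<longrightarrow> norm (F_partial F e \<nu> x - x) < \<epsilon>"
proof
  fix x :: 'a
  define D where "D j w = F_partial F e (n j) w - schauder_partial f (n j) w" for j w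
  have "\<forall>j. \<exists>M. is_support (schauder_coord f) (D j) M"
    unfolding D_def by (rule assms(6))
  then obtain M where M: "\<And>j. is_support (schauder_coord f) (D j) (M j)"
    by (rule choice[THEN exE]) blast
  have "\<forall>j. \<exists>y. (\<forall>m\<in>M j. y m \<noteq> 0) \<and> (\<forall>w. D j w = (\<Sum>m\<in>M j. schauder_coord f m w *\<^sub>R y m))"
    using M unfolding is_support_def by blast
  then obtain y where "\<forall>j. (\<forall>m\<in>M j. y j m \<noteq> 0) \<and> (\<forall>w. D j w = (\<Sum>m\<in>M j. schauder_coord f m w *\<^sub>R y j m))"
    by (rule choice[THEN exE]) blast
  then have Dy: "\<And>j w. D j w = (\<Sum>m\<in>M j. schauder_coord f m w *\<^sub>R y j m)" by blast
  have fin: "finite (M j)" for j using M unfolding is_support_def by blast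
  have less: "u < v" if "i < j" "u \<in> M i" "v \<in> M j" for i j u v
  proof -
    have "set_less (M i) (M j)" by (rule assms(7)[rule_format, OF that(1) M[of i, unfolded D_def] M[of j, unfolded D_def]])
    then show ?thesis using that unfolding set_less_def by blast
  qed
  define good where "good L \<longleftrightarrow> (\<forall>j. (\<forall>m\<in>M j. m < L) \<or> (\<forall>m\<in>M j. L \<le> m))" for L
  have unb: "\<exists>L\<ge>N. good L" for N
  proof (cases "\<exists>j. \<exists>m\<in>M j. N \<le> m")
    case True
    then obtain j m where jm: "m \<in> M j" "N \<le> m" by blast
    define U where "U = (\<Union>i\<le>j. M i)"
    have Uf: "finite U" unfolding U_def using fin by auto
    have mU: "m \<in> U" unfolding U_def using jm by auto
    define L where "L = Suc (Max U)"
    have "m \<le> Max U" using Uf mU by simp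
    then have "N \<le> L" using jm unfolding L_def by simp
    moreover have "good L"
      unfolding good_def
    proof
      fix i
      show "(\<forall>m\<in>M i. m < L) \<or> (\<forall>m\<in>M i. L \<le> m)"
      proof (cases "i \<le> j")
        case True
        then have "M i \<subseteq> U" unfolding U_def by auto
        then have "\<forall>m\<in>M i. m \<le> Max U" using Uf by auto
        then show ?thesis unfolding L_def by auto
      next
        case False
        have "Max U \<in> U" using Uf mU by (intro Max_in) auto
        then obtain i' where "i' \<le> j" "Max U \<in> M i'" unfolding U_def by auto
        then have "\<forall>v\<in>M i. Max U < v" using less[of i' i] False by simp
        then show ?thesis unfolding L_def by auto
      qed
    qed
    ultimately show ?thesis by blast
  next
    case False
    then have "good N" unfolding good_def by (auto simp: not_le)
    then show ?thesis by blast
  qed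
  define a where "a k = schauder_coord f k x" for k
  have conv: "(\<lambda>N. \<Sum>k\<le>N. a k *\<^sub>R f k) \<longlonglongrightarrow> x"
    using sch_partial[OF assms(3), of x] unfolding schauder_partial_def a_def by simp
  obtain \<rho> :: "nat \<Rightarrow> nat" where
    rinv: "\<And>m m'. (\<forall>L. good L \<longrightarrow> (L \<le> m \<longleftrightarrow> L \<le> m')) \<Longrightarrow> \<rho> m = \<rho> m'" and
    runb: "\<And>R. \<exists>K. \<forall>m\<ge>K. R \<le> \<rho> m" and
    rconv: "convergent (\<lambda>N. \<Sum>k\<le>N. ((1 + real (\<rho> k)) * a k) *\<^sub>R f k)"
    using weights[OF conv unb] by blast
  define c where "c k = (1 + real (\<rho> k)) * a k" for k
  obtain z where zlim: "(\<lambda>N. \<Sum>k\<le>N. c k *\<^sub>R f k) \<longlonglongrightarrow> z"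
    using rconv unfolding convergent_def c_def by blast
  have cz: "schauder_coord f k z = c k" for k using sch_coord[OF assms(3) zlim] .
  have const: "\<rho> m = \<rho> m'" if "m \<in> M j" "m' \<in> M j" for j m m'
  proof (rule rinv, intro allI impI)
    fix L assume "good L"
    then have "(\<forall>m\<in>M j. m < L) \<or> (\<forall>m\<in>M j. L \<le> m)" unfolding good_def by blast
    then show "L \<le> m \<longleftrightarrow> L \<le> m'" using that by auto
  qed
  have Dz: "D j z = (1 + real (\<rho> m0)) *\<^sub>R D j x" if "m0 \<in> M j" for j m0
  proof -
    have "D j z = (\<Sum>m\<in>M j. c m *\<^sub>R y j m)" using Dy cz by simp
    also have "\<dots> = (\<Sum>m\<in>M j. (1 + real (\<rho> m0)) *\<^sub>R (a m *\<^sub>R y j m))"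
      by (rule sum.cong) (use const[OF _ that] in \<open>auto simp: c_def\<close>)
    also have "\<dots> = (1 + real (\<rho> m0)) *\<^sub>R D j x"
      using Dy[of j x] unfolding a_def by (simp add: scaleR_sum_right)
    finally show ?thesis .
  qed
  have Dempty: "D j w = 0" if "M j = {}" for j w using Dy[of j w] that by simp
  have evbig: "\<exists>J. \<forall>j\<ge>J. \<forall>m\<in>M j. R \<le> \<rho> m" for R
  proof -
    obtain K where K: "\<forall>m\<ge>K. R \<le> \<rho> m" using runb by blast
    define S where "S = {j. \<exists>m\<in>M j. m < K}"
    define g where "g j = (LEAST m. m \<in> M j \<and> m < K)" for j
    have gS: "g j \<in> M j \<and> g j < K" if "j \<in> S" for j
    proof -
      have "\<exists>m. m \<in> M j \<and> m < K" using that unfolding S_def by blast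
      then show ?thesis unfolding g_def by (rule LeastI_ex)
    qed
    have "inj_on g S"
    proof (rule inj_onI)
      fix i j assume "i \<in> S" "j \<in> S" "g i = g j"
      then have gi: "g i \<in> M i" and gj: "g j \<in> M j" and e: "g i = g j" using gS by blast+
      show "i = j"
      proof (rule ccontr)
        assume "i \<noteq> j"
        then consider "i < j" | "j < i" by linarith
        then show False
        proof cases
          case 1 then show False using less[OF 1 gi gj] e by simp
        next
          case 2 then show False using less[OF 2 gj gi] e by simp
        qed
      qed
    qed
    moreover have "g ` S \<subseteq> {..<K}" using gS by auto
    ultimately have "finite S" by (rule inj_on_finite) simp
    then obtain J where J: "\<forall>s\<in>S. s < J" using finite_nat_bounded by blast
    have "\<forall>j\<ge>J. \<forall>m\<in>M j. R \<le> \<rho> m"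
    proof (intro allI impI ballI)
      fix j m assume "J \<le> j" "m \<in> M j"
      then have "j \<notin> S" using J by auto
      then have "K \<le> m" using \<open>m \<in> M j\<close> unfolding S_def by auto
      then show "R \<le> \<rho> m" using K by blast
    qed
    then show ?thesis by blast
  qed
  have Tlim: "\<And>w \<epsilon>. \<epsilon> > 0 \<Longrightarrow> \<exists>J. \<forall>j\<ge>J. norm (schauder_partial f (n j) w - w) < \<epsilon>"
  proof -
    fix w :: 'a and \<epsilon> :: real assume "\<epsilon> > 0"
    from LIMSEQ_D[OF sch_partial[OF assms(3)] this] obtain J where
      J: "\<forall>N\<ge>J. norm (schauder_partial f N w - w) < \<epsilon>" by blast
    have "\<forall>j\<ge>J. norm (schauder_partial f (n j) w - w) < \<epsilon>"
    proof (intro allI impI)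
      fix j assume "J \<le> j"
      moreover have "j \<le> n j" using seq_suble[OF assms(4)] by simp
      ultimately show "norm (schauder_partial f (n j) w - w) < \<epsilon>" using J by simp
    qed
    then show "\<exists>J. \<forall>j\<ge>J. norm (schauder_partial f (n j) w - w) < \<epsilon>" by blast
  qed
  obtain B where B: "B \<in> F" "\<forall>\<nu>\<in>B. norm (z - F_partial F e \<nu> z) < 1/2"
    using F_partial_lim[OF assms(2), of z] unfolding F_lim_def by (meson half_gt_zero zero_less_one)
  define A where "A = B \<inter> range n"
  have AF: "A \<in> F" using assms(1,5) B(1) unfolding A_def is_set_filter_def by blast
  show "\<exists>A\<in>F. \<forall>\<epsilon>>0. \<exists>N. \<forall>\<nu>\<in>A. \<nu> \<ge> N \<longrightarrow> norm (F_partial F e \<nu> x - x) < \<epsilon>"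
  proof (intro bexI[OF _ AF] allI impI)
    fix \<epsilon> :: real assume ep: "\<epsilon> > 0"
    define R where "R = nat \<lceil>2 / \<epsilon>\<rceil>"
    have R: "2 / \<epsilon> \<le> real R" unfolding R_def by linarith
    obtain J1 where J1: "\<forall>j\<ge>J1. \<forall>m\<in>M j. R \<le> \<rho> m" using evbig by blast
    obtain J2 where J2: "\<forall>j\<ge>J2. norm (schauder_partial f (n j) z - z) < 1/2"
      using Tlim[of "1/2"] by auto
    obtain J3 where J3: "\<forall>j\<ge>J3. norm (schauder_partial f (n j) x - x) < \<epsilon>/2"
      using Tlim[of "\<epsilon>/2"] ep by auto
    show "\<exists>N. \<forall>\<nu>\<in>A. \<nu> \<ge> N \<longrightarrow> norm (F_partial F e \<nu> x - x) < \<epsilon>"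
    proof (intro exI[of _ "n (max J1 (max J2 J3))"] ballI impI)
      fix \<nu> assume "\<nu> \<in> A" and nu: "n (max J1 (max J2 J3)) \<le> \<nu>"
      then obtain j where j: "\<nu> = n j" "\<nu> \<in> B" unfolding A_def by auto
      have jge: "max J1 (max J2 J3) \<le> j"
        using nu j assms(4) by (simp add: strict_mono_less_eq)
      have Dzb: "norm (D j z) < 1"
      proof -
        have "D j z = (F_partial F e (n j) z - z) + (z - schauder_partial f (n j) z)"
          unfolding D_def by simp
        then have "norm (D j z) \<le> norm (z - F_partial F e (n j) z) + norm (schauder_partial f (n j) z - z)"
          by (metis norm_minus_commute norm_triangle_ineq)
        moreover have "norm (z - F_partial F e (n j) z) < 1/2" using B(2) j by auto
        moreover have "norm (schauder_partial f (n j) z - z) < 1/2" using J2 jge by auto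
        ultimately show ?thesis by linarith
      qed
      have Dxb: "norm (D j x) < \<epsilon>/2"
      proof (cases "M j = {}")
        case True then show ?thesis using Dempty ep by simp
      next
        case False
        then obtain m0 where m0: "m0 \<in> M j" by blast
        have "R \<le> \<rho> m0" using J1 jge m0 by auto
        then have W: "2 / \<epsilon> < 1 + real (\<rho> m0)" using R by linarith
        have "norm (D j z) = (1 + real (\<rho> m0)) * norm (D j x)" using Dz[OF m0] by simp
        then have "(1 + real (\<rho> m0)) * norm (D j x) < 1" using Dzb by simp
        moreover have "2 / \<epsilon> * norm (D j x) \<le> (1 + real (\<rho> m0)) * norm (D j x)"
          using W by (intro mult_right_mono) auto
        ultimately have "2 / \<epsilon> * norm (D j x) < 1" by linarith
        then show ?thesis using ep by (simp add: field_simps)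
      qed
      have "F_partial F e \<nu> x - x = D j x + (schauder_partial f (n j) x - x)"
        unfolding D_def j by simp
      then have "norm (F_partial F e \<nu> x - x) \<le> norm (D j x) + norm (schauder_partial f (n j) x - x)"
        by (metis norm_triangle_ineq)
      moreover have "norm (schauder_partial f (n j) x - x) < \<epsilon>/2" using J3 jge by auto
      ultimately show "norm (F_partial F e \<nu> x - x) < \<epsilon>" using Dxb by linarith
    qed
  qed
qed

end
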